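(* Let $d:\mathbb{Z}\to\mathbb{C}$ be bounded and $(Ju)(n)=u(n-1)+d(n)u(n)+u(n+1)$ on $\ell^2(\mathbb{Z})$. Let $a+ib$ ($a,b\in\mathbb{R}$) be a boundary eigenvalue of $J$ and assume that $\Im(d(n))\ne b$ for infinitely many $n\in\mathbb{Z}$. Then $$\inf\sigma_{ess}(J_0+\Re(D))\le a\le\sup\sigma_{ess}(J_0+\Re(D)).$$
   Context: $J_0$ is the operator $(J_0u)(n)=u(n-1)+u(n+1)$ on $\ell^2(\mathbb{Z})$ and $\Re(D)$ is multiplication by $\Re(d(n))$. $\sigma_{ess}$ denotes the essential spectrum. The numerical range is $\operatorname{Num}(J)=\{\langle Ju,u\rangle:\|u\|=1\}$, and a boundary eigenvalue of $J$ is an eigenvalue of $J$ lying in the topological boundary of $\operatorname{Num}(J)$. *)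

theory Defs
  imports "HOL-Analysis.Analysis"
begin

definition l2 :: "(int \<Rightarrow> complex) set" where
  "l2 = {u. (\<lambda>n. (cmod (u n))\<^sup>2) summable_on UNIV}"

definition l2_inner :: "(int \<Rightarrow> complex) \<Rightarrow> (int \<Rightarrow> complex) \<Rightarrow> complex" where
  "l2_inner u v = (\<Sum>\<^sub>\<infinity>n. u n * cnj (v n))"

definition l2_norm :: "(int \<Rightarrow> complex) \<Rightarrow> real" where
  "l2_norm u = sqrt (\<Sum>\<^sub>\<infinity>n. (cmod (u n))\<^sup>2)"

text \<open>(J u)(n) = u(n-1) + d(n) u(n) + u(n+1). With d = 0 this is J_0, and with
  d replaced by Re d it is J_0 + Re(D).\<close>
definition jacobi :: "(int \<Rightarrow> complex) \<Rightarrow> (int \<Rightarrow> complex) \<Rightarrow> (int \<Rightarrow> complex)" where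
  "jacobi d u = (\<lambda>n. u (n - 1) + d n * u n + u (n + 1))"

definition num_range :: "((int \<Rightarrow> complex) \<Rightarrow> (int \<Rightarrow> complex)) \<Rightarrow> complex set" where
  "num_range A = {l2_inner (A u) u | u. u \<in> l2 \<and> l2_norm u = 1}"

definition is_eigenvalue :: "((int \<Rightarrow> complex) \<Rightarrow> (int \<Rightarrow> complex)) \<Rightarrow> complex \<Rightarrow> bool" where
  "is_eigenvalue A z \<longleftrightarrow> (\<exists>u\<in>l2. u \<noteq> (\<lambda>_. 0) \<and> A u = (\<lambda>n. z * u n))"

definition boundary_eigenvalue :: "((int \<Rightarrow> complex) \<Rightarrow> (int \<Rightarrow> complex)) \<Rightarrow> complex \<Rightarrow> bool" where
  "boundary_eigenvalue A z \<longleftrightarrow> is_eigenvalue A z \<and> z \<in> frontier (num_range A)"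

text \<open>For bounded self-adjoint
  operators (the only case used) this coincides with every standard definition.\<close>
definition ess_spectrum :: "((int \<Rightarrow> complex) \<Rightarrow> (int \<Rightarrow> complex)) \<Rightarrow> complex set" where
  "ess_spectrum A = {z. \<exists>u :: nat \<Rightarrow> int \<Rightarrow> complex.
      (\<forall>k. u k \<in> l2 \<and> l2_norm (u k) = 1) \<and>
      (\<forall>v\<in>l2. (\<lambda>k. l2_inner (u k) v) \<longlonglongrightarrow> 0) \<and>
      (\<lambda>k. l2_norm (\<lambda>n. A (u k) n - z * u k n)) \<longlonglongrightarrow> 0}"

end

theory Submission
  imports Defs
begin


definition nsq :: "(int \<Rightarrow> complex) \<Rightarrow> real" where
  "nsq u = (\<Sum>\<^sub>\<infinity>n. (cmod (u n))\<^sup>2)"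

definition fsup :: "(int \<Rightarrow> 'a::zero) \<Rightarrow> bool" where
  "fsup u \<longleftrightarrow> (\<exists>R. \<forall>n. R < \<bar>n\<bar> \<longrightarrow> u n = 0)"

lemma l2_norm_nsq: "l2_norm u = sqrt (nsq u)"
  by (simp add: l2_norm_def nsq_def)

lemma nsq_nonneg: "0 \<le> nsq u"
  unfolding nsq_def by (rule infsum_nonneg) simp

lemma fsup_summable:
  fixes f :: "int \<Rightarrow> 'b::{comm_monoid_add,topological_space}"
  assumes "fsup f" shows "f summable_on UNIV"
proof -
  obtain R where R: "\<And>n. R < \<bar>n\<bar> \<Longrightarrow> f n = 0" using assms unfolding fsup_def by blast
  have "f summable_on {-R..R}" by simp
  then show ?thesis
    by (subst summable_on_cong_neutral[where T="{-R..R}" and g=f]) (use R in auto)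
qed

lemma fsup_mult1: "fsup f \<Longrightarrow> fsup (\<lambda>n. f n * (g n :: 'a::mult_zero))"
  unfolding fsup_def by (metis (mono_tags) mult_zero_left)
lemma fsup_mult2: "fsup f \<Longrightarrow> fsup (\<lambda>n. (g n :: 'a::mult_zero) * f n)"
  unfolding fsup_def by (metis (mono_tags) mult_zero_right)
lemma fsup_add: "fsup f \<Longrightarrow> fsup g \<Longrightarrow> fsup (\<lambda>n. f n + (g n :: 'a::monoid_add))"
proof -
  assume "fsup f" "fsup g"
  then obtain R S where "\<And>n. R < \<bar>n\<bar> \<Longrightarrow> f n = 0" "\<And>n. S < \<bar>n\<bar> \<Longrightarrow> g n = 0"
    unfolding fsup_def by blast
  then show ?thesis unfolding fsup_def by (intro exI[of _ "max R S"]) auto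
qed

lemma l2_iff: "u \<in> l2 \<longleftrightarrow> (\<lambda>n. (cmod (u n))\<^sup>2) summable_on UNIV"
  by (simp add: l2_def)

lemma fsup_l2: "fsup u \<Longrightarrow> u \<in> l2"
  unfolding l2_iff by (rule fsup_summable) (auto simp: fsup_def)

lemma shift_bij: "bij_betw (\<lambda>n::int. n + k) UNIV UNIV"
  by (rule bij_betwI[where g="\<lambda>n. n - k"]) auto

lemma infsum_shift: "(\<Sum>\<^sub>\<infinity>n. f (n + k)) = (\<Sum>\<^sub>\<infinity>n::int. f n)"
  using infsum_reindex_bij_betw[OF shift_bij[of k], of f] by simp

lemma summable_shift: "(\<lambda>n. f (n + k)) summable_on UNIV \<longleftrightarrow> f summable_on (UNIV::int set)"
  using summable_on_reindex_bij_betw[OF shift_bij[of k], of f] by simp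

lemma l2_shift: "u \<in> l2 \<Longrightarrow> (\<lambda>n. u (n + k)) \<in> l2"
  unfolding l2_iff using summable_shift[of "\<lambda>n. (cmod (u n))\<^sup>2" k] by simp

lemma nsq_shift: "nsq (\<lambda>n. u (n + k)) = nsq u"
  unfolding nsq_def using infsum_shift[of "\<lambda>n. (cmod (u n))\<^sup>2" k] by simp

lemma real_summable_cmp:
  fixes f g :: "int \<Rightarrow> real"
  assumes "f summable_on UNIV" "\<And>n. 0 \<le> g n" "\<And>n. g n \<le> f n"
  shows "g summable_on UNIV"
  using summable_on_comparison_test[of f UNIV g] assms by auto

lemma l2_prod:
  assumes "f \<in> l2" "g \<in> l2"
  shows "(\<lambda>n. f n * cnj (g n)) summable_on UNIV"
proof -
  have s: "(\<lambda>n. ((cmod (f n))\<^sup>2 + (cmod (g n))\<^sup>2) / 2) summable_on UNIV"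
    using summable_on_cmult_left[OF summable_on_add[of "\<lambda>n. (cmod (f n))\<^sup>2" UNIV "\<lambda>n. (cmod (g n))\<^sup>2"], of "1/2"]
      assms unfolding l2_iff by simp
  have "(\<lambda>n. norm (f n * cnj (g n))) summable_on UNIV"
  proof (rule real_summable_cmp[OF s])
    fix n
    have "2 * (cmod (f n) * cmod (g n)) \<le> (cmod (f n))\<^sup>2 + (cmod (g n))\<^sup>2"
      using sum_squares_bound[of "cmod (f n)" "cmod (g n)"] by (simp add: mult.assoc)
    then show "norm (f n * cnj (g n)) \<le> ((cmod (f n))\<^sup>2 + (cmod (g n))\<^sup>2) / 2"
      by (simp add: norm_mult)
  qed simp
  then show ?thesis using summable_on_iff_abs_summable_on_complex by blast
qed

lemma l2_lin:
  assumes "f \<in> l2" "g \<in> l2"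
  shows "(\<lambda>n. f n + t * g n) \<in> l2"
proof -
  have s: "(\<lambda>n. 2 * (cmod (f n))\<^sup>2 + 2 * ((cmod t)\<^sup>2 * (cmod (g n))\<^sup>2)) summable_on UNIV"
    using assms unfolding l2_iff
    by (intro summable_on_cmult_right summable_on_add) auto
  show ?thesis unfolding l2_iff
  proof (rule real_summable_cmp[OF s])
    fix n
    have "cmod (f n + t * g n) \<le> cmod (f n) + cmod t * cmod (g n)"
      using norm_triangle_ineq[of "f n" "t * g n"] by (simp add: norm_mult)
    then have "(cmod (f n + t * g n))\<^sup>2 \<le> (cmod (f n) + cmod t * cmod (g n))\<^sup>2"
      by (intro power_mono) auto
    moreover have "(cmod (f n) + cmod t * cmod (g n))\<^sup>2 \<le> 2 * (cmod (f n))\<^sup>2 + 2 * (cmod t * cmod (g n))\<^sup>2"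
    proof -
      have "0 \<le> (cmod (f n) - cmod t * cmod (g n))\<^sup>2" by simp
      then show ?thesis by (simp add: power2_diff power2_sum)
    qed
    ultimately have "(cmod (f n + t * g n))\<^sup>2 \<le> 2 * (cmod (f n))\<^sup>2 + 2 * (cmod t * cmod (g n))\<^sup>2"
      by (rule order_trans)
    then show "(cmod (f n + t * g n))\<^sup>2 \<le> 2 * (cmod (f n))\<^sup>2 + 2 * ((cmod t)\<^sup>2 * (cmod (g n))\<^sup>2)"
      by (simp only: power_mult_distrib)
  qed simp
qed

lemma l2_scale: "f \<in> l2 \<Longrightarrow> (\<lambda>n. t * f n) \<in> l2"
  using l2_lin[of "\<lambda>_. 0" f t] by (simp add: l2_iff)

lemma ip_cnj: "l2_inner y x = cnj (l2_inner x y)"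
  unfolding l2_inner_def infsum_cnj[symmetric] by (simp add: mult.commute)

lemma ip_addL:
  assumes "x \<in> l2" "y \<in> l2" "z \<in> l2"
  shows "l2_inner (\<lambda>n. x n + t * y n) z = l2_inner x z + t * l2_inner y z"
proof -
  have "l2_inner (\<lambda>n. x n + t * y n) z = (\<Sum>\<^sub>\<infinity>n. x n * cnj (z n) + t * (y n * cnj (z n)))"
    unfolding l2_inner_def by (simp add: algebra_simps)
  also have "\<dots> = l2_inner x z + (\<Sum>\<^sub>\<infinity>n. t * (y n * cnj (z n)))"
    unfolding l2_inner_def
    by (rule infsum_add; (intro summable_on_cmult_right l2_prod assms)?)
  also have "\<dots> = l2_inner x z + t * l2_inner y z"
    unfolding l2_inner_def by (simp add: infsum_cmult_right')
  finally show ?thesis .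
qed

lemma ip_addR:
  assumes "x \<in> l2" "y \<in> l2" "z \<in> l2"
  shows "l2_inner x (\<lambda>n. y n + t * z n) = l2_inner x y + cnj t * l2_inner x z"
  using ip_addL[OF assms(2,3,1), of t] by (subst ip_cnj) (simp add: ip_cnj[of x])

lemma ip_scaleL: "l2_inner (\<lambda>n. t * x n) z = t * l2_inner x z"
  unfolding l2_inner_def by (simp add: infsum_cmult_right'[symmetric] mult.assoc)

lemma ip_scaleR: "l2_inner x (\<lambda>n. t * z n) = cnj t * l2_inner x z"
  by (subst ip_cnj) (simp add: ip_scaleL ip_cnj[of x])

lemma ip_self: "x \<in> l2 \<Longrightarrow> l2_inner x x = complex_of_real (nsq x)"
proof -
  assume "x \<in> l2"
  then have "((\<lambda>n. (cmod (x n))\<^sup>2) has_sum nsq x) UNIV"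
    unfolding l2_iff nsq_def using has_sum_infsum by blast
  then have "((\<lambda>n. complex_of_real ((cmod (x n))\<^sup>2)) has_sum complex_of_real (nsq x)) UNIV"
    by (rule has_sum_of_real)
  then show ?thesis unfolding l2_inner_def
    by (simp add: infsumI complex_mult_cnj cmod_def)
qed

lemma nsq_scale: "nsq (\<lambda>n. t * x n) = (cmod t)\<^sup>2 * nsq x"
  unfolding nsq_def by (simp add: norm_mult power_mult_distrib infsum_cmult_right')

lemma nsq_zero: "x \<in> l2 \<Longrightarrow> nsq x = 0 \<Longrightarrow> x n = 0"
  using nonneg_infsum_le_0D[of "\<lambda>n. (cmod (x n))\<^sup>2" UNIV n]
  by (simp add: nsq_def l2_iff)

lemma ip_bound:
  assumes "f \<in> l2" "g \<in> l2"
  shows "cmod (l2_inner f g) \<le> (nsq f + nsq g) / 2"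
proof -
  have h1: "((\<lambda>n. f n * cnj (g n)) has_sum l2_inner f g) UNIV"
    unfolding l2_inner_def using l2_prod[OF assms] has_sum_infsum by blast
  have "((\<lambda>n. (cmod (f n))\<^sup>2) has_sum nsq f) UNIV" "((\<lambda>n. (cmod (g n))\<^sup>2) has_sum nsq g) UNIV"
    using assms unfolding l2_iff nsq_def by (auto intro: has_sum_infsum)
  from has_sum_divide_const[OF has_sum_add[OF this], of 2]
  have h2: "((\<lambda>n. ((cmod (f n))\<^sup>2 + (cmod (g n))\<^sup>2) / 2) has_sum ((nsq f + nsq g) / 2)) UNIV" .
  show ?thesis
  proof (rule norm_infsum_le[OF h1 h2])
    fix n
    have "2 * (cmod (f n) * cmod (g n)) \<le> (cmod (f n))\<^sup>2 + (cmod (g n))\<^sup>2"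
      using sum_squares_bound[of "cmod (f n)" "cmod (g n)"] by (simp add: mult.assoc)
    then show "norm (f n * cnj (g n)) \<le> ((cmod (f n))\<^sup>2 + (cmod (g n))\<^sup>2) / 2"
      by (simp add: norm_mult)
  qed
qed



lemma jac_lin: "jacobi d (\<lambda>n. x n + t * y n) = (\<lambda>n. jacobi d x n + t * jacobi d y n)"
  unfolding jacobi_def by (auto simp: algebra_simps)

lemma jac_scale: "jacobi d (\<lambda>n. t * x n) = (\<lambda>n. t * jacobi d x n)"
  unfolding jacobi_def by (auto simp: algebra_simps)

lemma jac_zero: "jacobi d (\<lambda>n. 0) = (\<lambda>n. 0)"
  unfolding jacobi_def by auto

lemma jac_fsup: "fsup x \<Longrightarrow> fsup (jacobi d x)"
proof -
  assume "fsup x"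
  then obtain R where R: "\<And>n. R < \<bar>n\<bar> \<Longrightarrow> x n = 0" unfolding fsup_def by blast
  show ?thesis unfolding fsup_def jacobi_def
  proof (intro exI[of _ "R + 1"] allI impI)
    fix n :: int assume "R + 1 < \<bar>n\<bar>"
    then have "R < \<bar>n - 1\<bar>" "R < \<bar>n\<bar>" "R < \<bar>n + 1\<bar>" by auto
    then show "x (n - 1) + d n * x n + x (n + 1) = 0" by (simp add: R)
  qed
qed

lemma l2_mult_bdd:
  assumes "\<And>n. cmod (e n) \<le> C" "x \<in> l2"
  shows "(\<lambda>n. e n * x n) \<in> l2"
proof -
  have s: "(\<lambda>n. C\<^sup>2 * (cmod (x n))\<^sup>2) summable_on UNIV"
    using assms(2) unfolding l2_iff by (intro summable_on_cmult_right)
  show ?thesis unfolding l2_iff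
  proof (rule real_summable_cmp[OF s])
    fix n
    have "cmod (e n) * cmod (x n) \<le> C * cmod (x n)"
      by (rule mult_right_mono) (use assms in auto)
    then have "(cmod (e n) * cmod (x n))\<^sup>2 \<le> (C * cmod (x n))\<^sup>2"
      by (intro power_mono) auto
    then show "(cmod (e n * x n))\<^sup>2 \<le> C\<^sup>2 * (cmod (x n))\<^sup>2"
      by (simp add: norm_mult power_mult_distrib)
  qed simp
qed

lemma sq3: "((a::real) + b + c)\<^sup>2 \<le> 3 * (a\<^sup>2 + b\<^sup>2 + c\<^sup>2)"
proof -
  have "0 \<le> (a - b)\<^sup>2 + (b - c)\<^sup>2 + (a - c)\<^sup>2" by simp
  then show ?thesis by (simp add: power2_eq_square algebra_simps)
qed

lemma norm3: "cmod (a + b + c) \<le> cmod a + cmod b + cmod c"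
  using norm_triangle_ineq[of "a + b" c] norm_triangle_ineq[of a b] by linarith

lemma jac_bound:
  assumes C: "\<And>n. cmod (d n) \<le> C" and x: "x \<in> l2"
  shows "jacobi d x \<in> l2" "nsq (jacobi d x) \<le> 3 * (2 + C\<^sup>2) * nsq x"
proof -
  let ?g = "\<lambda>n. 3 * ((cmod (x (n - 1)))\<^sup>2 + C\<^sup>2 * (cmod (x n))\<^sup>2 + (cmod (x (n + 1)))\<^sup>2)"
  have s1: "(\<lambda>n. (cmod (x (n + k)))\<^sup>2) summable_on UNIV" for k
    using l2_shift[OF x, of k] unfolding l2_iff .
  have s1': "(\<lambda>n. (cmod (x (n - 1)))\<^sup>2) summable_on UNIV"
    using s1[of "-1"] by simp
  have s0: "(\<lambda>n. (cmod (x n))\<^sup>2) summable_on UNIV" using x unfolding l2_iff .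
  have sg: "?g summable_on UNIV"
    by (intro summable_on_cmult_right summable_on_add s1 s1' s0)
  have pt: "(cmod (jacobi d x n))\<^sup>2 \<le> ?g n" for n
  proof -
    have "cmod (jacobi d x n) \<le> cmod (x (n - 1)) + C * cmod (x n) + cmod (x (n + 1))"
    proof -
      have "cmod (jacobi d x n) \<le> cmod (x (n - 1)) + cmod (d n * x n) + cmod (x (n + 1))"
        unfolding jacobi_def by (rule norm3)
      moreover have "cmod (d n * x n) \<le> C * cmod (x n)"
        unfolding norm_mult by (rule mult_right_mono) (use C in auto)
      ultimately show ?thesis by simp
    qed
    then have "(cmod (jacobi d x n))\<^sup>2 \<le> (cmod (x (n - 1)) + C * cmod (x n) + cmod (x (n + 1)))\<^sup>2"
      by (intro power_mono) auto
    also have "\<dots> \<le> ?g n"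
      using sq3[of "cmod (x (n - 1))" "C * cmod (x n)" "cmod (x (n + 1))"] by (simp add: power_mult_distrib)
    finally show ?thesis .
  qed
  show l: "jacobi d x \<in> l2" unfolding l2_iff
    by (rule real_summable_cmp[OF sg]) (use pt in auto)
  have "nsq (jacobi d x) \<le> infsum ?g UNIV"
    unfolding nsq_def by (rule infsum_mono) (use l pt sg in \<open>auto simp: l2_iff\<close>)
  also have "infsum ?g UNIV = 3 * (nsq x + C\<^sup>2 * nsq x + nsq x)"
    unfolding nsq_def
    using infsum_shift[of "\<lambda>n. (cmod (x n))\<^sup>2" "-1"] infsum_shift[of "\<lambda>n. (cmod (x n))\<^sup>2" 1]
    by (simp add: infsum_cmult_right' infsum_add s1 s1' s0 summable_on_add summable_on_cmult_right)
  finally show "nsq (jacobi d x) \<le> 3 * (2 + C\<^sup>2) * nsq x" by (simp add: algebra_simps)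
qed

lemma ip_shift: "l2_inner (\<lambda>n. x (n + k)) y = l2_inner x (\<lambda>n. y (n - k))"
  unfolding l2_inner_def
  using infsum_shift[of "\<lambda>n. x (n + k) * cnj (y n)" "-k"] by simp

lemma jac_herm:
  fixes c :: "int \<Rightarrow> real"
  assumes C: "\<And>n. \<bar>c n\<bar> \<le> C" and x: "x \<in> l2" and y: "y \<in> l2"
  shows "l2_inner (jacobi (\<lambda>n. of_real (c n)) x) y = l2_inner x (jacobi (\<lambda>n. of_real (c n)) y)"
proof -
  define cx where "cx = (\<lambda>n. complex_of_real (c n) * x n)"
  define cy where "cy = (\<lambda>n. complex_of_real (c n) * y n)"
  have Cc: "cmod (complex_of_real (c n)) \<le> C" for n using C by simp
  have cx: "cx \<in> l2" unfolding cx_def by (rule l2_mult_bdd[OF Cc x])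
  have cy: "cy \<in> l2" unfolding cy_def by (rule l2_mult_bdd[OF Cc y])
  have xm: "(\<lambda>n. x (n - 1)) \<in> l2" "(\<lambda>n. x (n + 1)) \<in> l2"
    using l2_shift[OF x, of "-1"] l2_shift[OF x, of 1] by auto
  have ym: "(\<lambda>n. y (n - 1)) \<in> l2" "(\<lambda>n. y (n + 1)) \<in> l2"
    using l2_shift[OF y, of "-1"] l2_shift[OF y, of 1] by auto
  have "jacobi (\<lambda>n. of_real (c n)) x = (\<lambda>n. (\<lambda>n. x (n - 1) + 1 * cx n) n + 1 * x (n + 1))"
    unfolding jacobi_def cx_def by auto
  then have "l2_inner (jacobi (\<lambda>n. of_real (c n)) x) y
      = l2_inner (\<lambda>n. x (n - 1)) y + l2_inner cx y + l2_inner (\<lambda>n. x (n + 1)) y"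
    using ip_addL[OF l2_lin[OF xm(1) cx, where t=1] xm(2) y, where t=1] ip_addL[OF xm(1) cx y, where t=1] by simp
  also have "\<dots> = l2_inner x (\<lambda>n. y (n + 1)) + l2_inner x cy + l2_inner x (\<lambda>n. y (n - 1))"
  proof -
    have "l2_inner cx y = l2_inner x cy"
      unfolding l2_inner_def cx_def cy_def by (simp add: mult.assoc mult.left_commute)
    then show ?thesis using ip_shift[of x "-1" y] ip_shift[of x 1 y] by simp
  qed
  also have "\<dots> = l2_inner x (\<lambda>n. (\<lambda>n. y (n - 1) + 1 * cy n) n + 1 * y (n + 1))"
    using ip_addR[OF x l2_lin[OF ym(1) cy, where t=1] ym(2), where t=1] ip_addR[OF x ym(1) cy, where t=1] by simp
  also have "(\<lambda>n. (\<lambda>n. y (n - 1) + 1 * cy n) n + 1 * y (n + 1)) = jacobi (\<lambda>n. of_real (c n)) y"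
    unfolding jacobi_def cy_def by auto
  finally show ?thesis .
qed



lemma amgm_eps: "0 < (e::real) \<Longrightarrow> 0 \<le> a \<Longrightarrow> 0 \<le> b \<Longrightarrow> a * b \<le> (e * a\<^sup>2 + b\<^sup>2 / e) / 2"
proof -
  assume e: "0 < e" and "0 \<le> a" "0 \<le> b"
  have "0 \<le> (e * a - b)\<^sup>2" by simp
  then have "2 * e * (a * b) \<le> e\<^sup>2 * a\<^sup>2 + b\<^sup>2" by (simp add: power2_diff power_mult_distrib algebra_simps)
  then show ?thesis using e by (simp add: power2_eq_square field_simps)
qed

lemma fsup_infsum_eq:
  fixes f :: "int \<Rightarrow> 'b::{comm_monoid_add,t2_space}"
  assumes "finite S" "\<And>n. n \<notin> S \<Longrightarrow> f n = 0"
  shows "infsum f UNIV = sum f S"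
proof -
  have "infsum f UNIV = infsum f S"
    by (rule infsum_cong_neutral) (use assms in auto)
  then show ?thesis using assms by simp
qed

lemma weak_small:
  assumes w: "w \<in> l2" and e: "0 < e"
  shows "\<exists>B::int. \<forall>v N. fsup v \<longrightarrow> (\<forall>m. \<bar>m\<bar> \<le> N \<longrightarrow> v m = 0) \<longrightarrow> nsq v = 1 \<longrightarrow> B \<le> N
            \<longrightarrow> cmod (l2_inner v w) \<le> e"
proof -
  let ?g = "\<lambda>n. (cmod (w n))\<^sup>2"
  have gs: "?g summable_on UNIV" using w unfolding l2_iff .
  obtain F where F: "finite F" "dist (sum ?g F) (nsq w) \<le> e\<^sup>2"
    using infsum_finite_approximation[OF gs, of "e\<^sup>2"] e unfolding nsq_def by auto
  define B where "B = Max (insert 0 (abs ` F))"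
  have FB: "n \<in> F \<Longrightarrow> \<bar>n\<bar> \<le> B" for n unfolding B_def using F(1) by auto
  show ?thesis
  proof (intro exI[of _ B] allI impI)
    fix v N assume v: "fsup v" "\<forall>m. \<bar>m\<bar> \<le> N \<longrightarrow> v m = 0" "nsq v = 1" "B \<le> N"
    obtain R where R: "\<And>n. R < \<bar>n\<bar> \<Longrightarrow> v n = 0" using v(1) unfolding fsup_def by blast
    define S where "S = {n \<in> {-R..R}. N < \<bar>n\<bar>}"
    have S: "finite S" unfolding S_def by (rule finite_subset[of _ "{-R..R}"]) auto
    have vS: "n \<notin> S \<Longrightarrow> v n = 0" for n using R v(2) unfolding S_def by force
    have SF: "S \<inter> F = {}" using FB v(4) unfolding S_def by force
    have ip: "l2_inner v w = (\<Sum>n\<in>S. v n * cnj (w n))"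
      unfolding l2_inner_def by (rule fsup_infsum_eq[OF S]) (use vS in auto)
    have nv: "(\<Sum>n\<in>S. (cmod (v n))\<^sup>2) = 1"
      using v(3) unfolding nsq_def by (subst (asm) fsup_infsum_eq[OF S]) (use vS in auto)
    have "sum ?g S + sum ?g F = sum ?g (S \<union> F)" using S F(1) SF by (simp add: sum.union_disjoint)
    also have "\<dots> \<le> nsq w" unfolding nsq_def
      by (rule finite_sum_le_infsum[OF gs]) (use S F(1) in auto)
    finally have gS: "sum ?g S \<le> e\<^sup>2" using F(2) by (simp add: dist_real_def abs_le_iff)
    have "cmod (l2_inner v w) \<le> (\<Sum>n\<in>S. cmod (v n) * cmod (w n))"
      unfolding ip by (rule order_trans[OF norm_sum]) (simp add: norm_mult)
    also have "\<dots> \<le> (\<Sum>n\<in>S. (e * (cmod (v n))\<^sup>2 + (cmod (w n))\<^sup>2 / e) / 2)"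
      by (rule sum_mono) (rule amgm_eps[OF e], auto)
    also have "\<dots> = (e * (\<Sum>n\<in>S. (cmod (v n))\<^sup>2) + sum ?g S / e) / 2"
      by (simp add: sum_divide_distrib[symmetric] sum_distrib_left sum.distrib)
    also have "\<dots> \<le> (e * 1 + e\<^sup>2 / e) / 2"
      unfolding nv using gS e by (simp add: divide_right_mono)
    also have "\<dots> = e" using e by (simp add: power2_eq_square)
    finally show "cmod (l2_inner v w) \<le> e" .
  qed
qed



lemma weyl_top:
  fixes A :: "(int \<Rightarrow> complex) \<Rightarrow> (int \<Rightarrow> complex)" and a C :: real
  assumes lin: "\<And>x y t. A (\<lambda>n. x n + t * y n) = (\<lambda>n. A x n + t * A y n)"
    and loc: "\<And>x (N::int) n. (\<And>m. \<bar>m\<bar> \<le> N + 1 \<Longrightarrow> x m = 0) \<Longrightarrow> \<bar>n\<bar> \<le> N \<Longrightarrow> A x n = 0"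
    and lfs: "\<And>x. fsup x \<Longrightarrow> fsup (A x)"
    and herm: "\<And>x y. fsup x \<Longrightarrow> fsup y \<Longrightarrow> l2_inner (A x) y = l2_inner x (A y)"
    and bnd: "\<And>x. fsup x \<Longrightarrow> nsq (A x) \<le> C * nsq x"
    and pcs: "\<And>N::int. \<exists>p. fsup p \<and> (\<forall>m. \<bar>m\<bar> \<le> N \<longrightarrow> p m = 0) \<and> nsq p = 1
                  \<and> l2_inner (A p) p = complex_of_real a"
  shows "\<exists>m\<ge>a. complex_of_real m \<in> ess_spectrum A"
proof -
  have A0: "A (\<lambda>n. 0) = (\<lambda>n. 0)"
  proof
    fix n
    have "A (\<lambda>n. 0) n = A (\<lambda>n. 0) n + 1 * A (\<lambda>n. 0) n"
      using fun_cong[OF lin[of "\<lambda>n. 0" 1 "\<lambda>n. 0"], of n] by simp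
    then show "A (\<lambda>n. 0) n = 0" by simp
  qed
  have Asc: "A (\<lambda>n. t * x n) = (\<lambda>n. t * A x n)" for t x
    using lin[of "\<lambda>n. 0" t x] A0 by simp
  define Q where "Q x = Re (l2_inner (A x) x)" for x
  define C1 where "C1 = (C + 1) / 2"
  have Qb: "\<bar>Q x\<bar> \<le> C1 * nsq x" if "fsup x" for x
  proof -
    have "\<bar>Q x\<bar> \<le> cmod (l2_inner (A x) x)" unfolding Q_def by (rule abs_Re_le_cmod)
    also have "\<dots> \<le> (nsq (A x) + nsq x) / 2"
      by (rule ip_bound) (use that lfs fsup_l2 in auto)
    also have "\<dots> \<le> C1 * nsq x" unfolding C1_def using bnd[OF that] by (simp add: field_simps)
    finally show ?thesis .
  qed
  define V where "V N = {x. fsup x \<and> (\<forall>m. \<bar>m\<bar> \<le> N \<longrightarrow> x m = 0) \<and> nsq x = 1}" for N :: int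
  define M where "M N = Sup (Q ` V N)" for N
  have pV: "\<exists>p\<in>V N. Q p = a" for N
    using pcs[of N] unfolding V_def Q_def by force
  have VQ: "x \<in> V N \<Longrightarrow> \<bar>Q x\<bar> \<le> C1" for x N
    using Qb unfolding V_def by force
  have bdd: "bdd_above (Q ` V N)" for N
    by (rule bdd_aboveI[of _ C1]) (use VQ in force)
  have ne: "Q ` V N \<noteq> {}" for N using pV by blast
  have MQ: "x \<in> V N \<Longrightarrow> Q x \<le> M N" for x N
    unfolding M_def by (rule cSup_upper) (use bdd in auto)
  have Ma: "a \<le> M N" for N using pV[of N] MQ by force
  have MC: "M N \<le> C1" for N
    unfolding M_def by (rule cSup_least[OF ne]) (use VQ in force)
  have MC': "- C1 \<le> M N" for N using pV[of N] MQ VQ by force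
  have Mmono: "M (N + 1) \<le> M N" for N
    unfolding M_def by (rule cSup_subset_mono[OF ne bdd]) (auto simp: V_def)
  have form: "Q x \<le> M N * nsq x" if x: "fsup x" "\<forall>m. \<bar>m\<bar> \<le> N \<longrightarrow> x m = 0" for x N
  proof (cases "nsq x = 0")
    case True
    then have "x = (\<lambda>n. 0)" using nsq_zero[OF fsup_l2[OF x(1)]] by auto
    then show ?thesis unfolding Q_def using A0 by (simp add: l2_inner_def nsq_def)
  next
    case False
    then have np: "0 < nsq x" using nsq_nonneg[of x] by auto
    define s where "s = 1 / sqrt (nsq x)"
    define y where "y = (\<lambda>n. complex_of_real s * x n)"
    have s2: "s\<^sup>2 * nsq x = 1" unfolding s_def using np by (simp add: power_divide)
    have "y \<in> V N" unfolding V_def y_def using x s2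
      by (auto simp: nsq_scale fsup_mult2 power_mult_distrib)
    then have "Q y \<le> M N" by (rule MQ)
    moreover have "Q y = s\<^sup>2 * Q x"
      unfolding Q_def y_def Asc ip_scaleL ip_scaleR by (simp add: power2_eq_square)
    ultimately have "s\<^sup>2 * Q x \<le> M N" by simp
    then have "s\<^sup>2 * Q x * nsq x \<le> M N * nsq x" using np by (simp add: mult_right_mono)
    moreover have "s\<^sup>2 * Q x * nsq x = Q x * (s\<^sup>2 * nsq x)" by (simp only: ac_simps)
    ultimately show ?thesis using s2 by simp
  qed
  have C1pos: "0 \<le> C1" using MC[of 0] MC'[of 0] by linarith
  define K where "K = 2 * C1 + 1"
  have Kpos: "0 < K" unfolding K_def using C1pos by simp
  have weyl: "nsq (\<lambda>n. complex_of_real (M N) * v n - A v n) \<le> K * (M N - Q v)"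
    if v: "v \<in> V (N + 1)" for v N
  proof -
    define w where "w = (\<lambda>n. complex_of_real (M N) * v n - A v n)"
    have vf: "fsup v" and v0: "\<forall>m. \<bar>m\<bar> \<le> N + 1 \<longrightarrow> v m = 0" and vn: "nsq v = 1"
      using v unfolding V_def by auto
    have wf: "fsup w" unfolding w_def
      using fsup_add[OF fsup_mult2[OF vf] fsup_mult2[OF lfs[OF vf]], of "\<lambda>_. complex_of_real (M N)" "\<lambda>_. -1"]
      by simp
    have w0: "\<forall>m. \<bar>m\<bar> \<le> N \<longrightarrow> w m = 0" unfolding w_def using v0 loc[where x=v and N=N] by auto
    have l2s: "v \<in> l2" "w \<in> l2" "A v \<in> l2" "A w \<in> l2" using fsup_l2 vf wf lfs by auto
    define t where "t = 1 / K"
    define xt where "xt = (\<lambda>n. v n + complex_of_real (- t) * w n)"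
    have xf: "fsup xt" unfolding xt_def by (intro fsup_add vf fsup_mult2 wf)
    have x0: "\<forall>m. \<bar>m\<bar> \<le> N \<longrightarrow> xt m = 0" unfolding xt_def using v0 w0 by auto
    have xl: "xt \<in> l2" using xf fsup_l2 by auto
    have fx: "Q xt \<le> M N * nsq xt" by (rule form[OF xf x0])
    have e1: "l2_inner (A xt) xt = l2_inner (A v) v + complex_of_real (- t) * l2_inner (A v) w
       + complex_of_real (- t) * (l2_inner (A w) v + complex_of_real (- t) * l2_inner (A w) w)"
    proof -
      have "l2_inner (A xt) xt = l2_inner (A v) xt + complex_of_real (- t) * l2_inner (A w) xt"
        unfolding xt_def lin by (rule ip_addL) (use l2s xl xt_def in auto)
      then show ?thesis unfolding xt_def
        using ip_addR[OF l2s(3) l2s(1) l2s(2), of "complex_of_real (- t)"]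
          ip_addR[OF l2s(4) l2s(1) l2s(2), of "complex_of_real (- t)"] by simp
    qed
    have e2: "l2_inner xt xt = l2_inner v v + complex_of_real (- t) * l2_inner v w
       + complex_of_real (- t) * (l2_inner w v + complex_of_real (- t) * l2_inner w w)"
    proof -
      have "l2_inner xt xt = l2_inner v xt + complex_of_real (- t) * l2_inner w xt"
        unfolding xt_def by (rule ip_addL) (use l2s xl xt_def in auto)
      then show ?thesis unfolding xt_def
        using ip_addR[OF l2s(1) l2s(1) l2s(2), of "complex_of_real (- t)"]
          ip_addR[OF l2s(2) l2s(1) l2s(2), of "complex_of_real (- t)"] by simp
    qed
    have h1: "l2_inner (A w) v = cnj (l2_inner (A v) w)"
      using herm[OF wf vf] ip_cnj[of w "A v"] by simp
    have h2: "l2_inner w v = cnj (l2_inner v w)" by (rule ip_cnj)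
    have h3: "l2_inner v v = 1" using ip_self[OF l2s(1)] vn by simp
    have h3': "l2_inner w w = complex_of_real (nsq w)" using ip_self[OF l2s(2)] .
    have h3'': "l2_inner xt xt = complex_of_real (nsq xt)" using ip_self[OF xl] .
    have h4: "l2_inner w w = complex_of_real (M N) * l2_inner v w - l2_inner (A v) w"
    proof -
      have "w = (\<lambda>n. (\<lambda>n. complex_of_real (M N) * v n) n + (-1) * A v n)" unfolding w_def by auto
      then have "l2_inner w w = l2_inner (\<lambda>n. complex_of_real (M N) * v n) w + (-1) * l2_inner (A v) w"
        using ip_addL[OF l2_scale[OF l2s(1)] l2s(3) l2s(2), of "complex_of_real (M N)" "-1"] by simp
      then show ?thesis by (simp add: ip_scaleL)
    qed
    define W where "W = nsq w"
    define RR where "RR = Re (l2_inner (A v) w)"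
    define PP where "PP = Re (l2_inner v w)"
    define GG where "GG = Re (l2_inner (A w) w)"
    have qx: "Q xt = Q v - 2 * t * RR + t\<^sup>2 * GG"
      unfolding Q_def RR_def GG_def e1 h1 by (simp add: power2_eq_square algebra_simps)
    have nx: "nsq xt = 1 - 2 * t * PP + t\<^sup>2 * W"
      using arg_cong[OF e2, of Re] unfolding PP_def W_def h2 h3 h3' h3''
      by (simp add: power2_eq_square algebra_simps)
    have rr: "RR = M N * PP - W"
      using arg_cong[OF h4, of Re] unfolding RR_def PP_def W_def h3' by simp
    have gg: "- C1 * W \<le> GG" using Qb[OF wf] unfolding Q_def GG_def W_def by simp
    have W0: "0 \<le> W" unfolding W_def by (rule nsq_nonneg)
    have "2 * t * W \<le> (M N - Q v) + t\<^sup>2 * (M N * W - GG)"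
      using fx unfolding qx nx rr by (simp add: algebra_simps)
    also have "t\<^sup>2 * (M N * W - GG) \<le> t\<^sup>2 * (2 * C1 * W)"
    proof (rule mult_left_mono)
      have "M N * W \<le> C1 * W" using MC W0 by (simp add: mult_right_mono)
      then show "M N * W - GG \<le> 2 * C1 * W" using gg by linarith
    qed simp
    also have "t\<^sup>2 * (2 * C1 * W) \<le> t * W"
    proof -
      have "t\<^sup>2 * (2 * C1 * W) \<le> t\<^sup>2 * (K * W)"
        by (rule mult_left_mono) (use W0 in \<open>auto simp: K_def intro: mult_right_mono\<close>)
      also have "\<dots> = t * W" unfolding t_def using Kpos by (simp add: power2_eq_square)
      finally show ?thesis .
    qed
    finally have "t * W \<le> M N - Q v" by (simp add: mult.commute)
    then have "K * (t * W) \<le> K * (M N - Q v)" using Kpos by (simp add: mult_left_mono)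
    then show ?thesis unfolding w_def[symmetric] W_def[symmetric] t_def using Kpos by simp
  qed
  define Ms where "Ms k = M (int k)" for k
  have Msdec: "decseq Ms"
    unfolding decseq_Suc_iff
  proof
    fix n show "Ms (Suc n) \<le> Ms n" using Mmono[of "int n"] by (simp add: Ms_def add.commute)
  qed
  have Msa: "\<forall>i. a \<le> Ms i" unfolding Ms_def using Ma by simp
  obtain L where L: "Ms \<longlonglongrightarrow> L" "\<forall>i. L \<le> Ms i"
    by (rule decseq_convergent[OF Msdec Msa])
  have La: "a \<le> L" by (rule LIMSEQ_le_const[OF L(1)]) (use Msa in blast)
  have MsS: "Ms (Suc k) = M (int k + 1)" for k
  proof -
    have "int (Suc k) = int k + 1" by simp
    then show ?thesis by (simp only: Ms_def)
  qed
  have "\<forall>k. \<exists>x. x \<in> V (int k + 1) \<and> Ms (Suc k) - 1 / real (Suc k) < Q x"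
  proof
    fix k
    have "Ms (Suc k) - 1 / real (Suc k) < Sup (Q ` V (int k + 1))"
      unfolding MsS M_def by simp
    then obtain y where "y \<in> Q ` V (int k + 1)" "Ms (Suc k) - 1 / real (Suc k) < y"
      by (rule less_cSupE[OF _ ne])
    then show "\<exists>x. x \<in> V (int k + 1) \<and> Ms (Suc k) - 1 / real (Suc k) < Q x" by blast
  qed
  then obtain v where v: "\<And>k. v k \<in> V (int k + 1)" "\<And>k. Ms (Suc k) - 1 / real (Suc k) < Q (v k)"
    by metis
  have vf: "fsup (v k)" and vn: "nsq (v k) = 1" and v0: "\<forall>m. \<bar>m\<bar> \<le> int k + 1 \<longrightarrow> v k m = 0" for k
    using v(1)[of k] unfolding V_def by auto
  define E where "E k = nsq (\<lambda>n. A (v k) n - complex_of_real L * v k n)" for k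
  define U where "U k = 2 * K * (Ms k - Ms (Suc k) + 1 / real (Suc k)) + 2 * (Ms k - L)\<^sup>2" for k
  have EU: "E k \<le> U k" for k
  proof -
    define w where "w = (\<lambda>n. complex_of_real (M (int k)) * v k n - A (v k) n)"
    have wf: "fsup w" unfolding w_def
      using fsup_add[OF fsup_mult2[OF vf[of k]] fsup_mult2[OF lfs[OF vf[of k]]], of "\<lambda>_. complex_of_real (M (int k))" "\<lambda>_. -1"]
      by simp
    have nw: "nsq w \<le> K * (Ms k - Q (v k))"
      using weyl[of "v k" "int k"] v(1)[of k] unfolding w_def Ms_def by simp
    have "Ms k - Q (v k) \<le> Ms k - Ms (Suc k) + 1 / real (Suc k)" using v(2)[of k] by simp
    then have "K * (Ms k - Q (v k)) \<le> K * (Ms k - Ms (Suc k) + 1 / real (Suc k))"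
      using Kpos by (intro mult_left_mono) auto
    then have nw2: "nsq w \<le> K * (Ms k - Ms (Suc k) + 1 / real (Suc k))"
      using nw by linarith
    have pt: "(cmod (A (v k) n - complex_of_real L * v k n))\<^sup>2
        \<le> 2 * (cmod (w n))\<^sup>2 + 2 * ((Ms k - L)\<^sup>2 * (cmod (v k n))\<^sup>2)" for n
    proof -
      have "A (v k) n - complex_of_real L * v k n = (- w n) + complex_of_real (Ms k - L) * v k n"
        unfolding w_def Ms_def by (simp add: algebra_simps)
      then have "cmod (A (v k) n - complex_of_real L * v k n) \<le> cmod (w n) + \<bar>Ms k - L\<bar> * cmod (v k n)"
        using norm_triangle_ineq[of "- w n" "complex_of_real (Ms k - L) * v k n"]
        by (simp add: norm_mult del: of_real_diff)
      then have "(cmod (A (v k) n - complex_of_real L * v k n))\<^sup>2 \<le> (cmod (w n) + \<bar>Ms k - L\<bar> * cmod (v k n))\<^sup>2"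
        by (intro power_mono) auto
      also have "\<dots> \<le> 2 * (cmod (w n))\<^sup>2 + 2 * (\<bar>Ms k - L\<bar> * cmod (v k n))\<^sup>2"
      proof -
        have "0 \<le> (cmod (w n) - \<bar>Ms k - L\<bar> * cmod (v k n))\<^sup>2" by simp
        then show ?thesis by (simp add: power2_diff power2_sum)
      qed
      finally show ?thesis by (simp add: power_mult_distrib)
    qed
    have s1: "(\<lambda>n. (cmod (w n))\<^sup>2) summable_on UNIV" using fsup_l2[OF wf] unfolding l2_iff .
    have s2: "(\<lambda>n. (cmod (v k n))\<^sup>2) summable_on UNIV" using fsup_l2[OF vf[of k]] unfolding l2_iff .
    have "E k \<le> (\<Sum>\<^sub>\<infinity>n. 2 * (cmod (w n))\<^sup>2 + 2 * ((Ms k - L)\<^sup>2 * (cmod (v k n))\<^sup>2))"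
      unfolding E_def nsq_def
    proof (rule infsum_mono[OF _ _ pt])
      show "(\<lambda>n. (cmod (A (v k) n - complex_of_real L * v k n))\<^sup>2) summable_on UNIV"
        using fsup_l2[OF fsup_add[OF lfs[OF vf[of k]] fsup_mult2[OF vf[of k]], of "\<lambda>_. - complex_of_real L"]]
        unfolding l2_iff by simp
      show "(\<lambda>n. 2 * (cmod (w n))\<^sup>2 + 2 * ((Ms k - L)\<^sup>2 * (cmod (v k n))\<^sup>2)) summable_on UNIV"
        by (intro summable_on_add summable_on_cmult_right s1 s2)
    qed
    also have "\<dots> = 2 * nsq w + 2 * (Ms k - L)\<^sup>2 * nsq (v k)"
      unfolding nsq_def
      by (simp add: infsum_add summable_on_cmult_right s1 s2 infsum_cmult_right')
    also have "\<dots> \<le> U k" unfolding U_def vn using nw2 by simp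
    finally show ?thesis .
  qed
  have E0: "0 \<le> E k" for k unfolding E_def by (rule nsq_nonneg)
  have "U \<longlonglongrightarrow> 2 * K * (L - L + 0) + 2 * (L - L)\<^sup>2"
    unfolding U_def
    by (intro tendsto_intros L(1) LIMSEQ_Suc[OF L(1)] LIMSEQ_Suc[OF lim_inverse_n'])
  then have U0: "U \<longlonglongrightarrow> 0" by simp
  have E0': "E \<longlonglongrightarrow> 0"
    by (rule tendsto_sandwich[OF _ _ tendsto_const U0]) (use E0 EU in auto)
  have weyl_seq: "(\<lambda>k. l2_norm (\<lambda>n. A (v k) n - complex_of_real L * v k n)) \<longlonglongrightarrow> 0"
    unfolding l2_norm_nsq using tendsto_real_sqrt[OF E0'] unfolding E_def by simp
  have weak: "(\<lambda>k. l2_inner (v k) w) \<longlonglongrightarrow> 0" if w: "w \<in> l2" for w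
  proof (rule LIMSEQ_I)
    fix r :: real assume r: "0 < r"
    obtain B where B: "\<And>u N. fsup u \<Longrightarrow> (\<forall>m. \<bar>m\<bar> \<le> N \<longrightarrow> u m = 0) \<Longrightarrow> nsq u = 1 \<Longrightarrow> B \<le> N
            \<Longrightarrow> cmod (l2_inner u w) \<le> r / 2"
      using weak_small[OF w, of "r / 2"] r by auto
    show "\<exists>no. \<forall>k\<ge>no. norm (l2_inner (v k) w - 0) < r"
    proof (intro exI[of _ "nat B"] allI impI)
      fix k assume "nat B \<le> k"
      then have "B \<le> int k + 1" by linarith
      then have "cmod (l2_inner (v k) w) \<le> r / 2" by (rule B[OF vf[of k] v0[of k] vn[of k]])
      then show "norm (l2_inner (v k) w - 0) < r" using r by simp
    qed
  qed
  have "complex_of_real L \<in> ess_spectrum A"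
    unfolding ess_spectrum_def
    by (rule CollectI, rule exI[of _ v]) (use vf vn fsup_l2 weak weyl_seq in \<open>auto simp: l2_norm_nsq\<close>)
  then show ?thesis using La by blast
qed


lemma consec_zero:
  fixes c :: "int \<Rightarrow> real"
  assumes eig: "\<And>n. jacobi (\<lambda>n. complex_of_real (c n)) u n = complex_of_real a * u n"
    and z: "u k = 0" "u (k + 1) = 0"
  shows "u n = 0"
proof -
  have fw: "u (n + 1) = complex_of_real a * u n - complex_of_real (c n) * u n - u (n - 1)" for n
    using eig[of n] unfolding jacobi_def by (simp add: algebra_simps)
  have bw: "u (n - 1) = complex_of_real a * u n - complex_of_real (c n) * u n - u (n + 1)" for n
    using eig[of n] unfolding jacobi_def by (simp add: algebra_simps)
  have F: "u (k + int j) = 0 \<and> u (k + int j + 1) = 0" for j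
  proof (induction j)
    case 0 then show ?case using z by simp
  next
    case (Suc j)
    have "u (k + int j + 1 + 1) = 0"
      using fw[of "k + int j + 1"] Suc by simp
    moreover have e1: "k + int (Suc j) = k + int j + 1" and e2: "k + int (Suc j) + 1 = k + int j + 1 + 1" by simp_all
    ultimately show ?case unfolding e1 e2 using Suc by blast
  qed
  have Bk: "u (k - int j) = 0 \<and> u (k - int j + 1) = 0" for j
  proof (induction j)
    case 0 then show ?case using z by simp
  next
    case (Suc j)
    have "u (k - int j - 1) = 0"
      using bw[of "k - int j"] Suc by simp
    moreover have e1: "k - int (Suc j) = k - int j - 1" by simp
    ultimately show ?case unfolding e1 using Suc by simp
  qed
  show ?thesis
  proof (cases "k \<le> n")
    case True
    then have "n = k + int (nat (n - k))" by simp
    then show ?thesis using F[of "nat (n - k)"] by metis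
  next
    case False
    then have "n = k - int (nat (k - n))" by simp
    then show ?thesis using Bk[of "nat (k - n)"] by metis
  qed
qed

lemma piece:
  fixes c :: "int \<Rightarrow> real"
  assumes eig: "\<And>n. jacobi (\<lambda>n. complex_of_real (c n)) u n = complex_of_real a * u n"
    and z: "u z1 = 0" "u z2 = 0" "z1 < z2"
  defines "p \<equiv> (\<lambda>n. if z1 < n \<and> n < z2 then u n else 0)"
  shows "fsup p" "l2_inner (jacobi (\<lambda>n. complex_of_real (c n)) p) p = complex_of_real a * complex_of_real (nsq p)"
proof -
  show fp: "fsup p" unfolding fsup_def p_def
    by (rule exI[of _ "\<bar>z1\<bar> + \<bar>z2\<bar>"]) auto
  have pt: "jacobi (\<lambda>n. complex_of_real (c n)) p n * cnj (p n) = complex_of_real a * p n * cnj (p n)" for n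
  proof (cases "z1 < n \<and> n < z2")
    case True
    have "p (n - 1) = u (n - 1)" using True z unfolding p_def by (cases "n - 1 = z1") auto
    moreover have "p (n + 1) = u (n + 1)" using True z unfolding p_def by (cases "n + 1 = z2") auto
    moreover have pn: "p n = u n" using True unfolding p_def by auto
    ultimately have "jacobi (\<lambda>n. complex_of_real (c n)) p n = jacobi (\<lambda>n. complex_of_real (c n)) u n"
      unfolding jacobi_def by simp
    then show ?thesis using eig[of n] pn by simp
  next
    case False
    then have "p n = 0" unfolding p_def by auto
    then show ?thesis by simp
  qed
  have "l2_inner (jacobi (\<lambda>n. complex_of_real (c n)) p) p = l2_inner (\<lambda>n. complex_of_real a * p n) p"
    unfolding l2_inner_def by (intro infsum_cong pt)
  then show "l2_inner (jacobi (\<lambda>n. complex_of_real (c n)) p) p = complex_of_real a * complex_of_real (nsq p)"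
    using ip_scaleL ip_self[OF fsup_l2[OF fp]] by simp
qed

lemma pieces:
  fixes c :: "int \<Rightarrow> real"
  assumes eig: "\<And>n. jacobi (\<lambda>n. complex_of_real (c n)) u n = complex_of_real a * u n"
    and nz: "u n0 \<noteq> 0" and Z: "infinite {n. u n = 0}"
  shows "\<exists>p. fsup p \<and> (\<forall>m. \<bar>m\<bar> \<le> N \<longrightarrow> p m = 0) \<and> nsq p = 1
           \<and> l2_inner (jacobi (\<lambda>n. complex_of_real (c n)) p) p = complex_of_real a"
proof -
  let ?H = "jacobi (\<lambda>n. complex_of_real (c n))"
  have ex: "\<exists>z1 z2. u z1 = 0 \<and> u z2 = 0 \<and> z1 < z2 \<and> (\<exists>m. z1 < m \<and> m < z2 \<and> u m \<noteq> 0)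
              \<and> (\<forall>n. z1 < n \<and> n < z2 \<longrightarrow> N < \<bar>n\<bar>)"
  proof (cases "\<forall>B. \<exists>z. u z = 0 \<and> B < z")
    case True
    then obtain z1 where z1: "u z1 = 0" "\<bar>N\<bar> < z1" by blast
    have "\<exists>m. z1 < m \<and> u m \<noteq> 0"
    proof (rule ccontr)
      assume "\<not> ?thesis"
      then have "u (z1 + 1) = 0" by auto
      then have "u n0 = 0" using consec_zero[OF eig z1(1)] by blast
      then show False using nz by simp
    qed
    then obtain m where m: "z1 < m" "u m \<noteq> 0" by blast
    obtain z2 where z2: "u z2 = 0" "m < z2" using True by blast
    show ?thesis
      by (rule exI[of _ z1], rule exI[of _ z2]) (use z1 z2 m in auto)
  next
    case False
    then obtain B1 where B1: "\<And>z. u z = 0 \<Longrightarrow> z \<le> B1" by (meson not_le)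
    show ?thesis
    proof (cases "\<forall>B. \<exists>z. u z = 0 \<and> z < B")
      case True
      then obtain z2 where z2: "u z2 = 0" "z2 < - \<bar>N\<bar>" by blast
      have "\<exists>m. m < z2 \<and> u m \<noteq> 0"
      proof (rule ccontr)
        assume "\<not> ?thesis"
        then have "u (z2 - 1) = 0" by auto
        then have "u n0 = 0" using consec_zero[OF eig, of "z2 - 1"] z2 by simp
        then show False using nz by simp
      qed
      then obtain m where m: "m < z2" "u m \<noteq> 0" by blast
      obtain z1 where z1: "u z1 = 0" "z1 < m" using True by blast
      show ?thesis
        by (rule exI[of _ z1], rule exI[of _ z2]) (use z1 z2 m in auto)
    next
      case False
      then obtain B2 where B2: "\<And>z. u z = 0 \<Longrightarrow> B2 \<le> z" by (meson not_le)
      have "{n. u n = 0} \<subseteq> {B2..B1}" using B1 B2 by auto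
      then have "finite {n. u n = 0}" using finite_subset by blast
      then show ?thesis using Z by simp
    qed
  qed
  then obtain z1 z2 m where zz: "u z1 = 0" "u z2 = 0" "z1 < z2" "z1 < m" "m < z2" "u m \<noteq> 0"
    and out: "\<And>n. z1 < n \<Longrightarrow> n < z2 \<Longrightarrow> N < \<bar>n\<bar>" by blast
  define p where "p = (\<lambda>n. if z1 < n \<and> n < z2 then u n else 0)"
  have fp: "fsup p" and hp: "l2_inner (?H p) p = complex_of_real a * complex_of_real (nsq p)"
    using piece[OF eig zz(1-3)] unfolding p_def by auto
  have "nsq p \<noteq> 0"
  proof
    assume "nsq p = 0"
    then have "p m = 0" using nsq_zero[OF fsup_l2[OF fp]] by blast
    then show False using zz unfolding p_def by auto
  qed
  then have np: "0 < nsq p" using nsq_nonneg[of p] by auto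
  define s where "s = 1 / sqrt (nsq p)"
  have s2: "s\<^sup>2 * nsq p = 1" unfolding s_def using np by (simp add: power_divide)
  define q where "q = (\<lambda>n. complex_of_real s * p n)"
  show ?thesis
  proof (intro exI[of _ q] conjI allI impI)
    show "fsup q" unfolding q_def by (rule fsup_mult2[OF fp])
    show "q m' = 0" if "\<bar>m'\<bar> \<le> N" for m' using out[of m'] that unfolding q_def p_def by auto
    show "nsq q = 1" unfolding q_def nsq_scale using s2 by simp
    have "l2_inner (?H q) q = complex_of_real (s\<^sup>2 * nsq p) * complex_of_real a"
      unfolding q_def jac_scale ip_scaleL ip_scaleR hp by (simp add: power2_eq_square)
    then show "l2_inner (?H q) q = complex_of_real a" using s2 by simp
  qed
qed



lemma num_range_val:
  assumes u: "u \<in> l2" "nsq u = 1" and Ju: "jacobi d u = (\<lambda>n. lam * u n)"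
    and w: "fsup w" "l2_inner w u = 0"
  shows "(lam + z * l2_inner (jacobi d w) u + complex_of_real ((cmod z)\<^sup>2) * l2_inner (jacobi d w) w)
           / complex_of_real (1 + (cmod z)\<^sup>2 * nsq w) \<in> num_range (jacobi d)"
proof -
  let ?J = "jacobi d"
  define v where "v = (\<lambda>n. u n + z * w n)"
  have wl: "w \<in> l2" using fsup_l2[OF w(1)] .
  have Jwl: "?J w \<in> l2" using fsup_l2[OF jac_fsup[OF w(1)]] .
  have vl: "v \<in> l2" unfolding v_def by (rule l2_lin[OF u(1) wl])
  have zz: "z * cnj z = complex_of_real ((cmod z)\<^sup>2)" by (metis complex_norm_square)
  have uw: "l2_inner u w = 0" using ip_cnj[of u w] w(2) by simp
  have uu: "l2_inner u u = 1" using ip_self[OF u(1)] u(2) by simp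
  have "l2_inner v v = l2_inner u v + z * l2_inner w v"
    unfolding v_def by (rule ip_addL[OF u(1) wl]) (use vl v_def in simp)
  also have "\<dots> = 1 + (z * cnj z) * complex_of_real (nsq w)"
    unfolding v_def ip_addR[OF u(1) u(1) wl] ip_addR[OF wl u(1) wl] uw uu w(2) ip_self[OF wl]
    by (simp add: algebra_simps)
  also have "\<dots> = 1 + complex_of_real ((cmod z)\<^sup>2 * nsq w)"
    unfolding zz of_real_mult ..
  finally have "complex_of_real (nsq v) = 1 + complex_of_real ((cmod z)\<^sup>2 * nsq w)"
    using ip_self[OF vl] by simp
  from arg_cong[OF this, of Re] have nv: "nsq v = 1 + (cmod z)\<^sup>2 * nsq w" by simp
  have Jv: "?J v = (\<lambda>n. lam * u n + z * ?J w n)" unfolding v_def jac_lin Ju by simp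
  have "l2_inner (?J v) v = l2_inner (\<lambda>n. lam * u n) v + z * l2_inner (?J w) v"
    unfolding Jv by (rule ip_addL[OF l2_scale[OF u(1)] Jwl vl])
  also have "\<dots> = lam + z * l2_inner (jacobi d w) u + (z * cnj z) * l2_inner (jacobi d w) w"
    unfolding ip_scaleL v_def ip_addR[OF u(1) u(1) wl] ip_addR[OF Jwl u(1) wl] uw uu
    by (simp add: algebra_simps)
  also have "\<dots> = lam + z * l2_inner (jacobi d w) u + complex_of_real ((cmod z)\<^sup>2) * l2_inner (jacobi d w) w"
    unfolding zz ..
  finally have Jvv: "l2_inner (?J v) v = lam + z * l2_inner (jacobi d w) u
       + complex_of_real ((cmod z)\<^sup>2) * l2_inner (jacobi d w) w" .
  have np: "0 < nsq v" unfolding nv using nsq_nonneg[of w] by (simp add: add_pos_nonneg)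
  define r where "r = 1 / sqrt (nsq v)"
  have r2: "r\<^sup>2 = 1 / nsq v" unfolding r_def using np by (simp add: power_divide)
  define y where "y = (\<lambda>n. complex_of_real r * v n)"
  have yl: "y \<in> l2" unfolding y_def by (rule l2_scale[OF vl])
  have ny: "l2_norm y = 1" unfolding l2_norm_nsq y_def nsq_scale using r2 np by simp
  have "l2_inner (?J y) y = complex_of_real (r\<^sup>2) * l2_inner (?J v) v"
    unfolding y_def jac_scale ip_scaleL ip_scaleR by (simp add: power2_eq_square)
  also have "\<dots> = l2_inner (?J v) v / complex_of_real (nsq v)"
    unfolding r2 by simp
  finally have "l2_inner (?J y) y = (lam + z * l2_inner (jacobi d w) u
       + complex_of_real ((cmod z)\<^sup>2) * l2_inner (jacobi d w) w) / complex_of_real (1 + (cmod z)\<^sup>2 * nsq w)"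
    unfolding Jvv nv .
  then show ?thesis unfolding num_range_def using yl ny
    by (intro CollectI exI[of _ y] conjI) auto
qed



lemma solve_fix:
  fixes lam cc q :: complex and \<rho> :: real
  assumes cc: "cc \<noteq> 0" and rho: "0 \<le> \<rho>"
  shows "\<exists>e>0. \<forall>t0. cmod (t0 - lam) < e \<longrightarrow>
     (\<exists>z. (lam + z * cc + complex_of_real ((cmod z)\<^sup>2) * q) / complex_of_real (1 + (cmod z)\<^sup>2 * \<rho>) = t0)"
proof -
  define G where "G = (cmod lam + 1) * \<rho> + cmod q"
  have G0: "0 \<le> G" unfolding G_def using rho by simp
  have ccp: "0 < cmod cc" using cc by simp
  define rr where "rr = min 1 (cmod cc / (2 * (G + 1)))"
  have rr0: "0 < rr" unfolding rr_def using ccp G0 by simp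
  have rr1: "rr \<le> cmod cc / (2 * (G + 1))" unfolding rr_def by simp
  define e where "e = min 1 (rr * cmod cc / 2)"
  have e0: "0 < e" unfolding e_def using rr0 ccp by simp
  show ?thesis
  proof (intro exI[of _ e] conjI allI impI e0)
    fix t0 assume t0: "cmod (t0 - lam) < e"
    define y0 where "y0 = t0 - lam"
    have y1: "cmod y0 \<le> 1" and y2: "cmod y0 \<le> rr * cmod cc / 2"
      using t0 unfolding y0_def e_def by auto
    define X where "X = (lam + y0) * complex_of_real \<rho> - q"
    have XG: "cmod X \<le> G"
    proof -
      have "cmod X \<le> cmod (lam + y0) * \<rho> + cmod q"
        unfolding X_def using norm_triangle_ineq4[of "(lam + y0) * complex_of_real \<rho>" q] rho
        by (simp add: norm_mult)
      also have "\<dots> \<le> (cmod lam + 1) * \<rho> + cmod q"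
        using norm_triangle_ineq[of lam y0] y1 rho by (intro add_right_mono mult_right_mono) auto
      finally show ?thesis unfolding G_def .
    qed
    define T where "T z = (y0 + complex_of_real ((cmod z)\<^sup>2) * X) / cc" for z
    have cont: "continuous_on (cball 0 rr) T" unfolding T_def by (intro continuous_intros) (use cc in auto)
    have maps: "T \<in> cball 0 rr \<rightarrow> cball 0 rr"
    proof
      fix z :: complex assume "z \<in> cball 0 rr"
      then have z: "cmod z \<le> rr" by simp
      have z2: "(cmod z)\<^sup>2 \<le> rr * (cmod cc / (2 * (G + 1)))"
      proof -
        have "(cmod z)\<^sup>2 \<le> rr\<^sup>2" using z by (intro power_mono) auto
        also have "\<dots> = rr * rr" by (simp add: power2_eq_square)
        also have "\<dots> \<le> rr * (cmod cc / (2 * (G + 1)))" using rr0 rr1 by (intro mult_left_mono) auto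
        finally show ?thesis .
      qed
      have "(cmod z)\<^sup>2 * cmod X \<le> rr * (cmod cc / (2 * (G + 1))) * G"
        using z2 XG rr0 ccp G0 by (intro mult_mono) auto
      also have "\<dots> = rr * cmod cc / 2 * (G / (G + 1))" using G0 by (simp add: field_simps)
      also have "\<dots> \<le> rr * cmod cc / 2 * 1"
        using G0 rr0 ccp by (intro mult_left_mono) auto
      finally have b1: "(cmod z)\<^sup>2 * cmod X \<le> rr * cmod cc / 2" by simp
      have "cmod (y0 + complex_of_real ((cmod z)\<^sup>2) * X) \<le> cmod y0 + (cmod z)\<^sup>2 * cmod X"
        using norm_triangle_ineq[of y0 "complex_of_real ((cmod z)\<^sup>2) * X"] by (simp add: norm_mult norm_power)
      also have "\<dots> \<le> rr * cmod cc" using b1 y2 by linarith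
      finally have "cmod (y0 + complex_of_real ((cmod z)\<^sup>2) * X) / cmod cc \<le> rr * cmod cc / cmod cc"
        using ccp by (intro divide_right_mono) auto
      then have "cmod (T z) \<le> rr" unfolding T_def using ccp by (simp add: norm_divide)
      then show "T z \<in> cball 0 rr" by simp
    qed
    obtain z where "z \<in> cball 0 rr" "T z = z" using brouwer_ball[OF rr0 cont maps] by blast
    then have fz: "z * cc = y0 + complex_of_real ((cmod z)\<^sup>2) * X" unfolding T_def using cc
      by (simp add: field_simps)
    have "lam + z * cc + complex_of_real ((cmod z)\<^sup>2) * q = (lam + y0) * complex_of_real (1 + (cmod z)\<^sup>2 * \<rho>)"
      unfolding fz X_def by (simp add: algebra_simps)
    moreover have "complex_of_real (1 + (cmod z)\<^sup>2 * \<rho>) \<noteq> 0"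
    proof -
      have "0 < 1 + (cmod z)\<^sup>2 * \<rho>" using rho by (simp add: add_pos_nonneg)
      then show ?thesis by (simp only: of_real_eq_0_iff)
    qed
    ultimately show "\<exists>z. (lam + z * cc + complex_of_real ((cmod z)\<^sup>2) * q) / complex_of_real (1 + (cmod z)\<^sup>2 * \<rho>) = t0"
      unfolding y0_def by (intro exI[of _ z]) simp
  qed
qed

lemma perp_zero:
  assumes u: "u \<in> l2" "nsq u = 1" and Ju: "jacobi d u = (\<lambda>n. lam * u n)"
    and fr: "lam \<in> frontier (num_range (jacobi d))"
    and w: "fsup w" "l2_inner w u = 0"
  shows "l2_inner (jacobi d w) u = 0"
proof (rule ccontr)
  assume c: "l2_inner (jacobi d w) u \<noteq> 0"
  obtain e where e: "0 < e" and E: "\<And>t0. cmod (t0 - lam) < e \<Longrightarrow>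
     \<exists>z. (lam + z * l2_inner (jacobi d w) u + complex_of_real ((cmod z)\<^sup>2) * l2_inner (jacobi d w) w)
          / complex_of_real (1 + (cmod z)\<^sup>2 * nsq w) = t0"
    using solve_fix[OF c nsq_nonneg[of w], of lam "l2_inner (jacobi d w) w"] by blast
  have "ball lam e \<subseteq> num_range (jacobi d)"
  proof
    fix t0 assume "t0 \<in> ball lam e"
    then have "cmod (t0 - lam) < e" by (simp add: dist_norm norm_minus_commute)
    then obtain z where "(lam + z * l2_inner (jacobi d w) u + complex_of_real ((cmod z)\<^sup>2) * l2_inner (jacobi d w) w)
          / complex_of_real (1 + (cmod z)\<^sup>2 * nsq w) = t0" using E by blast
    then show "t0 \<in> num_range (jacobi d)" using num_range_val[OF u Ju w, of z] by simp
  qed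
  then have "lam \<in> interior (num_range (jacobi d))" using e by (auto simp: mem_interior)
  then show False using fr by (simp add: frontier_def)
qed



lemma ip_delta: "l2_inner (\<lambda>k. if k = n then \<alpha> else 0) f = \<alpha> * cnj (f n)"
proof -
  have "l2_inner (\<lambda>k. if k = n then \<alpha> else 0) f = (\<Sum>k\<in>{n}. (if k = n then \<alpha> else 0) * cnj (f k))"
    unfolding l2_inner_def by (rule fsup_infsum_eq) auto
  then show ?thesis by simp
qed

lemma ip_Je:
  "l2_inner (jacobi d (\<lambda>k. if k = n then 1 else 0)) f
     = cnj (f (n - 1) + cnj (d n) * f n + f (n + 1))"
proof -
  have "l2_inner (jacobi d (\<lambda>k. if k = n then 1 else 0)) f
      = (\<Sum>k\<in>{n - 1, n, n + 1}. jacobi d (\<lambda>k. if k = n then 1 else 0) k * cnj (f k))"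
    unfolding l2_inner_def by (rule fsup_infsum_eq) (auto simp: jacobi_def)
  also have "\<dots> = cnj (f (n - 1) + cnj (d n) * f n + f (n + 1))"
    by (simp add: jacobi_def)
  finally show ?thesis .
qed

lemma boundary_facts:
  assumes Cd: "\<And>n. cmod (d n) \<le> Cd" and be: "boundary_eigenvalue (jacobi d) lam"
  shows "\<exists>u. u \<in> l2 \<and> nsq u = 1 \<and> (\<forall>n. u n \<noteq> 0 \<longrightarrow> Im (d n) = Im lam)
           \<and> (\<forall>n. jacobi (\<lambda>n. complex_of_real (Re (d n))) u n = complex_of_real (Re lam) * u n)"
proof -
  let ?J = "jacobi d"
  obtain u0 where u0: "u0 \<in> l2" "u0 \<noteq> (\<lambda>_. 0)" "?J u0 = (\<lambda>n. lam * u0 n)"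
    and fr: "lam \<in> frontier (num_range ?J)"
    using be unfolding boundary_eigenvalue_def is_eigenvalue_def by blast
  have "nsq u0 \<noteq> 0"
  proof
    assume "nsq u0 = 0"
    then have "u0 = (\<lambda>_. 0)" using nsq_zero[OF u0(1)] by auto
    then show False using u0(2) by simp
  qed
  then have np: "0 < nsq u0" using nsq_nonneg[of u0] by auto
  define s where "s = 1 / sqrt (nsq u0)"
  have s2: "s\<^sup>2 * nsq u0 = 1" unfolding s_def using np by (simp add: power_divide)
  define u where "u = (\<lambda>n. complex_of_real s * u0 n)"
  have ul: "u \<in> l2" unfolding u_def by (rule l2_scale[OF u0(1)])
  have un: "nsq u = 1" unfolding u_def nsq_scale using s2 by simp
  have Ju: "?J u = (\<lambda>n. lam * u n)" unfolding u_def jac_scale u0(3) by (simp add: mult.left_commute)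
  define Js where "Js n = u (n - 1) + cnj (d n) * u n + u (n + 1)" for n
  define e where "e n = (\<lambda>k::int. if k = n then (1::complex) else 0)" for n
  have key: "u m * Js n = u n * Js m" for m n
  proof -
    define w where "w = (\<lambda>k. cnj (u m) * e n k + (- cnj (u n)) * e m k)"
    have fe: "fsup (e j)" for j unfolding fsup_def e_def by (rule exI[of _ "\<bar>j\<bar>"]) auto
    have le: "e j \<in> l2" for j by (rule fsup_l2[OF fe])
    have fw: "fsup w" unfolding w_def by (intro fsup_add fsup_mult2 fe)
    have sc: "(\<lambda>k. t * e j k) = (\<lambda>k. if k = j then t else 0)" for t j unfolding e_def by auto
    have "l2_inner w u = l2_inner (\<lambda>k. cnj (u m) * e n k) u + (- cnj (u n)) * l2_inner (e m) u"
      unfolding w_def by (rule ip_addL[OF l2_scale[OF le] le ul])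
    also have "\<dots> = 0" unfolding sc ip_scaleL
      by (simp add: ip_delta[of n "cnj (u m)", simplified] e_def ip_delta[of m 1, simplified])
    finally have wu: "l2_inner w u = 0" .
    have "?J w = (\<lambda>k. cnj (u m) * ?J (e n) k + (- cnj (u n)) * ?J (e m) k)"
      unfolding w_def jac_lin jac_scale ..
    moreover have "l2_inner (\<lambda>k. cnj (u m) * ?J (e n) k + (- cnj (u n)) * ?J (e m) k) u
        = l2_inner (\<lambda>k. cnj (u m) * ?J (e n) k) u + (- cnj (u n)) * l2_inner (?J (e m)) u"
      by (rule ip_addL) (intro l2_scale fsup_l2 jac_fsup fe ul)+
    ultimately have "l2_inner (?J w) u = cnj (u m) * l2_inner (?J (e n)) u + (- cnj (u n)) * l2_inner (?J (e m)) u"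
      by (simp only: ip_scaleL)
    also have "\<dots> = cnj (u m) * cnj (Js n) - cnj (u n) * cnj (Js m)"
      unfolding e_def ip_Je Js_def by simp
    finally have "cnj (u m) * cnj (Js n) - cnj (u n) * cnj (Js m) = 0"
      using perp_zero[OF ul un Ju fr fw wu] by simp
    then have "cnj (u m * Js n) = cnj (u n * Js m)" by simp
    then show ?thesis by (metis complex_cnj_cnj)
  qed
  obtain n0 where n0: "u n0 \<noteq> 0"
  proof -
    have "\<not> (\<forall>n. u n = 0)"
    proof
      assume "\<forall>n. u n = 0"
      then have "nsq u = 0" unfolding nsq_def by simp
      then show False using un by simp
    qed
    then show ?thesis using that by blast
  qed
  define \<mu> where "\<mu> = Js n0 / u n0"
  have JsE: "Js n = \<mu> * u n" for n
    using key[of n0 n] n0 unfolding \<mu>_def by (simp add: field_simps)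
  have dc: "d n - cnj (d n) = \<i> * complex_of_real (2 * Im (d n))" for n
    by (simp add: complex_eq_iff)
  have diff: "\<i> * complex_of_real (2 * Im (d n)) * u n = (lam - \<mu>) * u n" for n
  proof -
    have "?J u n - Js n = (d n - cnj (d n)) * u n" unfolding jacobi_def Js_def by (simp add: algebra_simps)
    then show ?thesis unfolding dc Ju JsE by (simp add: algebra_simps)
  qed
  define \<kappa> where "\<kappa> = Im (d n0)"
  have lm: "lam - \<mu> = \<i> * complex_of_real (2 * \<kappa>)"
    using diff[of n0] n0 unfolding \<kappa>_def by simp
  have imd: "Im (d n) = \<kappa>" if "u n \<noteq> 0" for n
  proof -
    have "\<i> * complex_of_real (2 * Im (d n)) = \<i> * complex_of_real (2 * \<kappa>)"
      using diff[of n] that unfolding lm by simp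
    then show ?thesis by simp
  qed
  define \<alpha> where "\<alpha> = lam - \<i> * complex_of_real \<kappa>"
  let ?H = "jacobi (\<lambda>n. complex_of_real (Re (d n)))"
  have Hu: "?H u n = \<alpha> * u n" for n
  proof -
    have re: "complex_of_real (Re (d n)) = d n - \<i> * complex_of_real (Im (d n))" by (simp add: complex_eq_iff)
    have "?H u n = ?J u n - \<i> * complex_of_real (Im (d n)) * u n"
      unfolding jacobi_def re by (simp add: algebra_simps)
    also have "\<dots> = \<alpha> * u n"
      unfolding Ju \<alpha>_def using imd[of n] by (cases "u n = 0") (auto simp: algebra_simps)
    finally show ?thesis .
  qed
  have Hu': "?H u = (\<lambda>n. \<alpha> * u n)" using Hu by auto
  have Cre: "\<bar>Re (d n)\<bar> \<le> Cd" for n using abs_Re_le_cmod[of "d n"] Cd[of n] by linarith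
  have "l2_inner (?H u) u = l2_inner u (?H u)" by (rule jac_herm[OF Cre ul ul])
  also have "\<dots> = cnj (l2_inner (?H u) u)" by (rule ip_cnj)
  finally have hh: "l2_inner (?H u) u = cnj (l2_inner (?H u) u)" .
  have "l2_inner (?H u) u = \<alpha>" unfolding Hu' ip_scaleL ip_self[OF ul] un by simp
  then have "\<alpha> = cnj \<alpha>" using hh by simp
  then have "Im \<alpha> = 0" by (simp add: complex_eq_iff)
  then have k: "Im lam = \<kappa>" and al: "\<alpha> = complex_of_real (Re lam)"
    unfolding \<alpha>_def by (auto simp: complex_eq_iff)
  show ?thesis
    by (rule exI[of _ u]) (use ul un imd k Hu al in auto)
qed



lemma ess_bound:
  fixes c :: "int \<Rightarrow> real"
  assumes C: "\<And>n. \<bar>c n\<bar> \<le> Cc" and z: "z \<in> ess_spectrum (jacobi (\<lambda>n. complex_of_real (c n)))"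
  shows "(cmod z)\<^sup>2 \<le> 2 * (3 * (2 + Cc\<^sup>2))"
proof -
  let ?H = "jacobi (\<lambda>n. complex_of_real (c n))"
  define C3 where "C3 = 3 * (2 + Cc\<^sup>2)"
  obtain u where u: "\<And>k. u k \<in> l2" "\<And>k. l2_norm (u k) = 1"
    and lim: "(\<lambda>k. l2_norm (\<lambda>n. ?H (u k) n - z * u k n)) \<longlonglongrightarrow> 0"
    using z unfolding ess_spectrum_def by blast
  have Cc: "cmod (complex_of_real (c n)) \<le> Cc" for n using C by simp
  have bd: "(cmod z)\<^sup>2 \<le> 2 * (l2_norm (\<lambda>n. ?H (u k) n - z * u k n))\<^sup>2 + 2 * C3" for k
  proof -
    define D where "D = (\<lambda>n. ?H (u k) n - z * u k n)"
    have nu: "nsq (u k) = 1" using u(2)[of k] nsq_nonneg[of "u k"] unfolding l2_norm_nsq by simp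
    have Hl: "?H (u k) \<in> l2" using jac_bound(1)[OF Cc u(1)] .
    have Hb: "nsq (?H (u k)) \<le> C3 * nsq (u k)" unfolding C3_def using jac_bound(2)[OF Cc u(1)] .
    have Dl: "D \<in> l2" unfolding D_def using l2_lin[OF Hl u(1), of "- z"] by simp
    have pt: "(cmod (z * u k n))\<^sup>2 \<le> 2 * (cmod (D n))\<^sup>2 + 2 * (cmod (?H (u k) n))\<^sup>2" for n
    proof -
      have "z * u k n = ?H (u k) n - D n" unfolding D_def by simp
      then have "cmod (z * u k n) \<le> cmod (D n) + cmod (?H (u k) n)"
        using norm_triangle_ineq4[of "?H (u k) n" "D n"] by simp
      then have "(cmod (z * u k n))\<^sup>2 \<le> (cmod (D n) + cmod (?H (u k) n))\<^sup>2"
        by (intro power_mono) auto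
      also have "\<dots> \<le> 2 * (cmod (D n))\<^sup>2 + 2 * (cmod (?H (u k) n))\<^sup>2"
      proof -
        have "0 \<le> (cmod (D n) - cmod (?H (u k) n))\<^sup>2" by simp
        then show ?thesis by (simp add: power2_diff power2_sum)
      qed
      finally show ?thesis .
    qed
    have "(cmod z)\<^sup>2 = nsq (\<lambda>n. z * u k n)" unfolding nsq_scale nu by simp
    also have "\<dots> \<le> (\<Sum>\<^sub>\<infinity>n. 2 * (cmod (D n))\<^sup>2 + 2 * (cmod (?H (u k) n))\<^sup>2)"
      unfolding nsq_def
    proof (rule infsum_mono[OF _ _ pt])
      show "(\<lambda>n. (cmod (z * u k n))\<^sup>2) summable_on UNIV"
        using l2_scale[OF u(1)] unfolding l2_iff by blast
      show "(\<lambda>n. 2 * (cmod (D n))\<^sup>2 + 2 * (cmod (?H (u k) n))\<^sup>2) summable_on UNIV"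
        using Dl Hl unfolding l2_iff by (intro summable_on_add summable_on_cmult_right)
    qed
    also have "\<dots> = 2 * nsq D + 2 * nsq (?H (u k))"
      using Dl Hl unfolding l2_iff nsq_def
      by (simp add: infsum_add summable_on_cmult_right infsum_cmult_right')
    also have "nsq D = (l2_norm D)\<^sup>2" unfolding l2_norm_nsq using nsq_nonneg[of D] by simp
    finally show ?thesis unfolding D_def using Hb nu by simp
  qed
  have "(\<lambda>k. 2 * (l2_norm (\<lambda>n. ?H (u k) n - z * u k n))\<^sup>2 + 2 * C3) \<longlonglongrightarrow> 2 * 0\<^sup>2 + 2 * C3"
    by (intro tendsto_intros lim)
  then have "(cmod z)\<^sup>2 \<le> 2 * 0\<^sup>2 + 2 * C3"
    by (rule LIMSEQ_le_const) (use bd in blast)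
  then show ?thesis unfolding C3_def by simp
qed

lemma neg_ess:
  assumes "z \<in> ess_spectrum (\<lambda>x n. - A x n)"
  shows "- z \<in> ess_spectrum A"
proof -
  have eq: "(\<lambda>n. - A x n - z * x n) = (\<lambda>n. (-1) * (A x n - (- z) * x n))" for x
    by (auto simp: algebra_simps)
  have "l2_norm (\<lambda>n. - A x n - z * x n) = l2_norm (\<lambda>n. A x n - (- z) * x n)" for x
    unfolding eq l2_norm_nsq nsq_scale by simp
  then show ?thesis using assms unfolding ess_spectrum_def by simp
qed

theorem mainTheorem11:
  fixes d :: "int \<Rightarrow> complex" and a b :: real
  assumes "bounded (range d)"
    and "boundary_eigenvalue (jacobi d) (Complex a b)"
    and "infinite {n. Im (d n) \<noteq> b}"
  shows "Inf {x::real. complex_of_real x \<in> ess_spectrum (jacobi (\<lambda>n. complex_of_real (Re (d n))))} \<le> a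
       \<and> a \<le> Sup {x::real. complex_of_real x \<in> ess_spectrum (jacobi (\<lambda>n. complex_of_real (Re (d n))))}"
proof -
  obtain Cd where Cd: "\<And>n. cmod (d n) \<le> Cd" using assms(1) unfolding bounded_iff by auto
  obtain u where ul: "u \<in> l2" and un: "nsq u = 1" and imd: "\<And>n. u n \<noteq> 0 \<Longrightarrow> Im (d n) = b"
    and eig: "\<And>n. jacobi (\<lambda>n. complex_of_real (Re (d n))) u n = complex_of_real a * u n"
    using boundary_facts[OF Cd assms(2)] by auto
  define c where "c n = Re (d n)" for n
  let ?H = "jacobi (\<lambda>n. complex_of_real (c n))"
  have Cc: "\<bar>c n\<bar> \<le> Cd" for n unfolding c_def using abs_Re_le_cmod[of "d n"] Cd[of n] by linarith
  have Cc': "cmod (complex_of_real (c n)) \<le> Cd" for n using Cc by simp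
  have eig': "?H u n = complex_of_real a * u n" for n using eig unfolding c_def .
  obtain n0 where n0: "u n0 \<noteq> 0"
  proof -
    have "\<not> (\<forall>n. u n = 0)"
    proof
      assume "\<forall>n. u n = 0"
      then have "nsq u = 0" unfolding nsq_def by simp
      then show False using un by simp
    qed
    then show ?thesis using that by blast
  qed
  have Z: "infinite {n. u n = 0}"
    using assms(3) imd by (rule_tac infinite_super[of "{n. Im (d n) \<noteq> b}"]) auto
  have pcs: "\<exists>p. fsup p \<and> (\<forall>m. \<bar>m\<bar> \<le> N \<longrightarrow> p m = 0) \<and> nsq p = 1 \<and> l2_inner (?H p) p = complex_of_real a" for N
    by (rule pieces[OF eig' n0 Z])
  have loc: "?H x n = 0" if "\<And>m. \<bar>m\<bar> \<le> N + 1 \<Longrightarrow> x m = 0" "\<bar>n\<bar> \<le> N" for x N n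
    using that unfolding jacobi_def by simp
  have herm: "l2_inner (?H x) y = l2_inner x (?H y)" if "fsup x" "fsup y" for x y
    by (rule jac_herm[OF Cc fsup_l2[OF that(1)] fsup_l2[OF that(2)]])
  have bnd: "nsq (?H x) \<le> 3 * (2 + Cd\<^sup>2) * nsq x" if "fsup x" for x
    by (rule jac_bound(2)[OF Cc' fsup_l2[OF that]])
  have "\<exists>m\<ge>a. complex_of_real m \<in> ess_spectrum ?H"
  proof (rule weyl_top[where C="3 * (2 + Cd\<^sup>2)"])
    show "\<And>x y t. ?H (\<lambda>n. x n + t * y n) = (\<lambda>n. ?H x n + t * ?H y n)" by (rule jac_lin)
    show "\<And>x N n. (\<And>m. \<bar>m\<bar> \<le> N + 1 \<Longrightarrow> x m = 0) \<Longrightarrow> \<bar>n\<bar> \<le> N \<Longrightarrow> ?H x n = 0" by (rule loc)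
    show "\<And>x. fsup x \<Longrightarrow> fsup (?H x)" by (rule jac_fsup)
    show "\<And>x y. fsup x \<Longrightarrow> fsup y \<Longrightarrow> l2_inner (?H x) y = l2_inner x (?H y)" by (rule herm)
    show "\<And>x. fsup x \<Longrightarrow> nsq (?H x) \<le> 3 * (2 + Cd\<^sup>2) * nsq x" by (rule bnd)
    show "\<And>N. \<exists>p. fsup p \<and> (\<forall>m. \<bar>m\<bar> \<le> N \<longrightarrow> p m = 0) \<and> nsq p = 1 \<and> l2_inner (?H p) p = complex_of_real a"
      by (rule pcs)
  qed
  then obtain m1 where m1: "a \<le> m1" "complex_of_real m1 \<in> ess_spectrum ?H" by blast
  let ?A = "\<lambda>x n. - ?H x n"
  have neg: "(\<lambda>n. - f n) = (\<lambda>n. (-1) * f n)" for f :: "int \<Rightarrow> complex" by simp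
  have linA: "?A (\<lambda>n. x n + t * y n) = (\<lambda>n. ?A x n + t * ?A y n)" for x y t
    unfolding jac_lin by (simp add: algebra_simps)
  have locA: "?A x n = 0" if "\<And>m. \<bar>m\<bar> \<le> N + 1 \<Longrightarrow> x m = 0" "\<bar>n\<bar> \<le> N" for x N n
    using loc[OF that] by simp
  have fsA: "fsup (?A x)" if "fsup x" for x
    using fsup_mult2[OF jac_fsup[OF that], of "\<lambda>_. -1"] by simp
  have hermA: "l2_inner (?A x) y = l2_inner x (?A y)" if "fsup x" "fsup y" for x y
  proof -
    have e1: "(\<lambda>n. - ?H x n) = (\<lambda>n. (-1) * ?H x n)" "(\<lambda>n. - ?H y n) = (\<lambda>n. (-1) * ?H y n)" by simp_all
    show ?thesis unfolding e1 ip_scaleL ip_scaleR herm[OF that] by simp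
  qed
  have bndA: "nsq (?A x) \<le> 3 * (2 + Cd\<^sup>2) * nsq x" if "fsup x" for x
  proof -
    have "nsq (?A x) = nsq (?H x)" unfolding nsq_def by simp
    then show ?thesis using bnd[OF that] by simp
  qed
  have pcsA: "\<exists>p. fsup p \<and> (\<forall>m. \<bar>m\<bar> \<le> N \<longrightarrow> p m = 0) \<and> nsq p = 1 \<and> l2_inner (?A p) p = complex_of_real (- a)" for N
  proof -
    obtain p where p: "fsup p" "\<forall>m. \<bar>m\<bar> \<le> N \<longrightarrow> p m = 0" "nsq p = 1" "l2_inner (?H p) p = complex_of_real a"
      using pcs[of N] by blast
    have e1: "(\<lambda>n. - ?H p n) = (\<lambda>n. (-1) * ?H p n)" by simp
    have "l2_inner (?A p) p = complex_of_real (- a)" unfolding e1 ip_scaleL p(4) by simp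
    then show ?thesis using p by blast
  qed
  have "\<exists>m\<ge>- a. complex_of_real m \<in> ess_spectrum ?A"
  proof (rule weyl_top[where C="3 * (2 + Cd\<^sup>2)"])
    show "\<And>x y t. ?A (\<lambda>n. x n + t * y n) = (\<lambda>n. ?A x n + t * ?A y n)" by (rule linA)
    show "\<And>x N n. (\<And>m. \<bar>m\<bar> \<le> N + 1 \<Longrightarrow> x m = 0) \<Longrightarrow> \<bar>n\<bar> \<le> N \<Longrightarrow> ?A x n = 0" by (rule locA)
    show "\<And>x. fsup x \<Longrightarrow> fsup (?A x)" by (rule fsA)
    show "\<And>x y. fsup x \<Longrightarrow> fsup y \<Longrightarrow> l2_inner (?A x) y = l2_inner x (?A y)" by (rule hermA)
    show "\<And>x. fsup x \<Longrightarrow> nsq (?A x) \<le> 3 * (2 + Cd\<^sup>2) * nsq x" by (rule bndA)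
    show "\<And>N. \<exists>p. fsup p \<and> (\<forall>m. \<bar>m\<bar> \<le> N \<longrightarrow> p m = 0) \<and> nsq p = 1 \<and> l2_inner (?A p) p = complex_of_real (- a)"
      by (rule pcsA)
  qed
  then obtain m2 where m2: "- a \<le> m2" "complex_of_real m2 \<in> ess_spectrum ?A" by blast
  have m2': "complex_of_real (- m2) \<in> ess_spectrum ?H" using neg_ess[OF m2(2)] by simp
  define S where "S = {x::real. complex_of_real x \<in> ess_spectrum ?H}"
  have Sb: "\<bar>x\<bar> \<le> sqrt (2 * (3 * (2 + Cd\<^sup>2)))" if "x \<in> S" for x
  proof -
    have "x\<^sup>2 \<le> 2 * (3 * (2 + Cd\<^sup>2))" using ess_bound[OF Cc, of "complex_of_real x"] that unfolding S_def by simp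
    then have "sqrt (x\<^sup>2) \<le> sqrt (2 * (3 * (2 + Cd\<^sup>2)))" by (rule real_sqrt_le_mono)
    then show ?thesis by simp
  qed
  have ba: "bdd_above S" by (rule bdd_aboveI[of _ "sqrt (2 * (3 * (2 + Cd\<^sup>2)))"]) (use Sb in force)
  have bb: "bdd_below S" by (rule bdd_belowI[of _ "- sqrt (2 * (3 * (2 + Cd\<^sup>2)))"]) (use Sb in force)
  have "m1 \<le> Sup S" by (rule cSup_upper[OF _ ba]) (use m1 in \<open>simp add: S_def\<close>)
  moreover have "Inf S \<le> - m2" by (rule cInf_lower[OF _ bb]) (use m2' in \<open>simp add: S_def\<close>)
  ultimately show ?thesis using m1(1) m2(1) unfolding S_def c_def by simp
qed


end
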